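(* Let $\lambda_{\max}>1$ and let $F:[0,\lambda_{\max}]\to\mathbb{R}$ be continuously differentiable, with $F''$ existing and continuous on $(0,\lambda_{\max})$, $F''(1)<0$, and $F^{(3)},F^{(4)}$ existing and bounded on $[0,\lambda_{\max}]$. Suppose $F(x)<F'(1)(x-1)+F(1)$ for all $x\in[0,\lambda_{\max}]\setminus\{1\}$. Then there exists a concave quadratic function $G$ with $G(1)=F(1)$ and $G'(1)=F'(1)$ such that $F(x)\le G(x)\le F'(1)(x-1)+F(1)$ for all $x\in[0,\lambda_{\max}]$. *)

theory Defs
  imports "HOL-Analysis.Analysis"
begin

definition concave_quadratic :: "(real \<Rightarrow> real) \<Rightarrow> bool" where
  "concave_quadratic G \<longleftrightarrow> (\<exists>a b c. a < 0 \<and> (\<forall>x. G x = a * x^2 + b * x + c))"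

end

theory Submission
  imports Defs
begin

theorem lemmaC2:
  fixes F F1 F2 F3 F4 :: "real \<Rightarrow> real" and lmax :: real
  assumes lmax: "lmax > 1"
    and F1: "\<And>x. x \<in> {0..lmax} \<Longrightarrow> (F has_real_derivative F1 x) (at x within {0..lmax})"
    and F1_cont: "continuous_on {0..lmax} F1"
    and F2: "\<And>x. x \<in> {0<..<lmax} \<Longrightarrow> (F1 has_real_derivative F2 x) (at x)"
    and F2_cont: "continuous_on {0<..<lmax} F2"
    and F2_neg: "F2 1 < 0"
    and F3: "\<And>x. x \<in> {0<..<lmax} \<Longrightarrow> (F2 has_real_derivative F3 x) (at x)"
    and F4: "\<And>x. x \<in> {0<..<lmax} \<Longrightarrow> (F3 has_real_derivative F4 x) (at x)"
    and F3_bdd: "bounded (F3 ` {0<..<lmax})"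
    and F4_bdd: "bounded (F4 ` {0<..<lmax})"
    and below: "\<And>x. x \<in> {0..lmax} - {1} \<Longrightarrow> F x < F1 1 * (x - 1) + F 1"
  shows "\<exists>G. concave_quadratic G \<and> G 1 = F 1 \<and> (G has_real_derivative F1 1) (at 1) \<and>
           (\<forall>x\<in>{0..lmax}. F x \<le> G x \<and> G x \<le> F1 1 * (x - 1) + F 1)"
proof -
  define h where "h x = F1 1 * (x - 1) + F 1 - F x" for x
  define k where "k = - F2 1 / 4"
  have kpos: "k > 0" using F2_neg by (simp add: k_def)
  have "isCont F2 1"
    using continuous_on_interior[OF F2_cont, of 1] lmax by (simp add: interior_open)
  then obtain d0 where d0: "d0 > 0" and d0': "\<And>y. dist y 1 < d0 \<Longrightarrow> dist (F2 y) (F2 1) < - F2 1 / 2"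
    using F2_neg unfolding continuous_at_eps_delta by (metis half_gt_zero neg_0_less_iff_less)
  define d where "d = min (d0/2) (min (1/2) ((lmax-1)/2))"
  have dpos: "d > 0" using d0 lmax by (simp add: d_def)
  have dsub: "1 - d > 0" "1 + d < lmax" "d < d0" using d0 lmax unfolding d_def by (auto simp: min_def field_simps)
  have F2le: "F2 y \<le> F2 1 / 2" if "\<bar>y - 1\<bar> \<le> d" for y
  proof -
    have "dist y 1 < d0" using that dsub by (simp add: dist_real_def)
    from d0'[OF this] show ?thesis by (simp add: dist_real_def abs_if split: if_splits)
  qed
  have Fd: "(F has_real_derivative F1 t) (at t)" if "0 < t" "t < lmax" for t
    using F1[of t] that at_within_Icc_at[OF that] by simp
  have near: "k * (x - 1)^2 \<le> h x" if xd: "\<bar>x - 1\<bar> \<le> d" for x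
  proof (cases "x = 1")
    case True then show ?thesis by (simp add: h_def)
  next
    case False
    define diff where "diff m = (if m = 0 then F else if m = 1 then F1 else F2)" for m :: nat
    have D: "\<forall>m t. m < 2 \<and> 1 - d \<le> t \<and> t \<le> 1 + d \<longrightarrow> DERIV (diff m) t :> diff (Suc m) t"
    proof (intro allI impI)
      fix m t assume a: "m < (2::nat) \<and> 1 - d \<le> t \<and> t \<le> 1 + d"
      then have t: "0 < t" "t < lmax" using dsub by auto
      show "DERIV (diff m) t :> diff (Suc m) t"
        using a Fd[OF t] F2[of t] t by (cases m) (auto simp: diff_def)
    qed
    obtain t where t: "(if x < 1 then x < t \<and> t < 1 else 1 < t \<and> t < x)"
      and eq: "F x = (\<Sum>m<2. (diff m 1 / fact m) * (x - 1)^m) + (diff 2 t / fact 2) * (x - 1)^2"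
    proof -
      have "1 - d \<le> x" "x \<le> 1 + d" using xd by auto
      then show ?thesis
        using Taylor[of 2 diff F "1 - d" "1 + d" 1 x, OF _ _ D] dpos False that
        by (simp add: diff_def) blast
    qed
    have "\<bar>t - 1\<bar> \<le> d" using t xd by (auto split: if_splits)
    then have "F2 t \<le> F2 1 / 2" by (rule F2le)
    moreover have Fx: "F x = F 1 + F1 1 * (x - 1) + F2 t / 2 * (x - 1)^2"
      using eq by (simp add: diff_def numeral_2_eq_2 lessThan_Suc)
    moreover have "(x-1)^2 \<ge> 0" by simp
    ultimately have "F2 t / 2 * (x - 1)^2 \<le> F2 1 / 4 * (x - 1)^2"
      by (intro mult_right_mono) auto
    with Fx show ?thesis unfolding h_def k_def by simp
  qed
  have hcont: "continuous_on {0..lmax} h"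
  proof -
    have "continuous_on {0..lmax} F"
      using F1 by (meson DERIV_continuous continuous_at_imp_continuous_on continuous_on_eq_continuous_within)
    then show ?thesis unfolding h_def by (intro continuous_intros)
  qed
  define K where "K = {0..lmax} \<inter> {x. d \<le> \<bar>x - 1\<bar>}"
  have Kc: "compact K" unfolding K_def
    by (intro compact_Int_closed compact_Icc closed_Collect_le continuous_intros)
  obtain m where mpos: "m > 0" and mK: "\<And>x. x \<in> K \<Longrightarrow> m \<le> h x"
  proof (cases "K = {}")
    case True then show ?thesis using that[of 1] by auto
  next
    case False
    have "continuous_on K h" using hcont by (rule continuous_on_subset) (auto simp: K_def)
    then obtain x0 where x0: "x0 \<in> K" "\<And>y. y \<in> K \<Longrightarrow> h x0 \<le> h y"
      using continuous_attains_inf[OF Kc False] by blast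
    have "x0 \<noteq> 1" using x0(1) dpos by (auto simp: K_def)
    then have "h x0 > 0" using below[of x0] x0(1) by (auto simp: K_def h_def)
    then show ?thesis using that x0 by blast
  qed
  define c where "c = min k (m / (lmax + 1)^2)"
  have cpos: "c > 0" using kpos mpos lmax by (simp add: c_def)
  define G where "G x = F1 1 * (x - 1) + F 1 - c * (x - 1)^2" for x
  have cq: "concave_quadratic G"
    unfolding concave_quadratic_def
    by (rule exI[of _ "-c"], rule exI[of _ "F1 1 + 2*c"], rule exI[of _ "F 1 - F1 1 - c"])
       (use cpos in \<open>auto simp: G_def power2_eq_square algebra_simps\<close>)
  have dG: "(G has_real_derivative F1 1) (at 1)"
    unfolding G_def by (auto intro!: derivative_eq_intros)
  have main: "F x \<le> G x" if x: "x \<in> {0..lmax}" for x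
  proof (cases "\<bar>x - 1\<bar> \<le> d")
    case True
    have "c * (x-1)^2 \<le> k * (x-1)^2" by (intro mult_right_mono) (auto simp: c_def)
    with near[OF True] show ?thesis by (simp add: h_def G_def)
  next
    case False
    then have "x \<in> K" using x by (auto simp: K_def)
    then have m: "m \<le> h x" by (rule mK)
    have sq: "(x-1)^2 \<le> (lmax+1)^2" using x lmax
      by (subst abs_le_square_iff[symmetric]) (auto simp: abs_if)
    have "c * (x-1)^2 \<le> m / (lmax + 1)^2 * (x-1)^2" by (intro mult_right_mono) (auto simp: c_def)
    also have "\<dots> \<le> m / (lmax + 1)^2 * (lmax+1)^2" using sq mpos by (intro mult_left_mono) auto
    also have "\<dots> = m" using lmax by simp
    finally show ?thesis using m by (simp add: h_def G_def)
  qed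
  show ?thesis
    apply (rule exI[of _ G])
    using cq dG main cpos by (auto simp: G_def)
qed

end
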